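(* Let $K$ be a compact metric space and let $(f_n)$ be a uniformly bounded sequence in $C(K)$ converging pointwise to a function $f$ with $f\notin D(K)$. Then there exists a complex number $c$ with $|c|=1$ such that for every $M<\infty$ and $\kappa>0$ there is a subsequence $(b_j)$ of $(cf_j)$, with difference sequence $(e_j)$, with the following property: for every strictly increasing sequence of integers $0<m_1<m_2<\cdots$ there exist $t\in K$ and an integer $k$ such that (1) $\sum_{j=1}^k \mathrm{Re}\, e_{m_{2j}}(t)>M$; (2) $\mathrm{Re}\, e_{m_{2j}}(t)>0$ for all $1\le j\le k$; (3) $\sum\{|e_i(t)| : i>1,\ i\notin\{m_1,m_2,\dots,m_{2k}\}\}<\kappa$.
   Context: $C(K)$ is the space of continuous complex-valued functions on $K$. $D(K)$ is the set of functions $f:K\to\mathbb{C}$ of the form $f=(u_1-u_2)+i(u_3-u_4)$ with $u_1,\dots,u_4$ bounded real lower semi-continuous functions on $K$ (equivalently, $f=\sum_j\varphi_j$ pointwise for some $(\varphi_j)\subset C(K)$ with $\sup_{k\in K}\sum_j|\varphi_j(k)|<\infty$). The difference sequence $(e_j)$ of $(b_j)$ is $e_1=b_1$, $e_j=b_j-b_{j-1}$ for $j>1$. *)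

theory Defs
  imports "HOL-Analysis.Analysis"
begin

definition lsc_on :: "'a::metric_space set \<Rightarrow> ('a \<Rightarrow> real) \<Rightarrow> bool" where
  "lsc_on K u \<longleftrightarrow> (\<forall>a. openin (top_of_set K) {x \<in> K. u x > a})"

definition D_K :: "'a::metric_space set \<Rightarrow> ('a \<Rightarrow> complex) set" where
  "D_K K = {f. \<exists>u1 u2 u3 u4.
      lsc_on K u1 \<and> lsc_on K u2 \<and> lsc_on K u3 \<and> lsc_on K u4 \<and>
      bounded (u1 ` K) \<and> bounded (u2 ` K) \<and> bounded (u3 ` K) \<and> bounded (u4 ` K) \<and>
      (\<forall>x\<in>K. f x = complex_of_real (u1 x - u2 x) + \<i> * complex_of_real (u3 x - u4 x))}"

text \<open>Difference sequence (1-indexed): e 1 = b 1, e j = b j - b (j-1) for j > 1.\<close>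
definition diff_seq :: "(nat \<Rightarrow> 'a \<Rightarrow> complex) \<Rightarrow> nat \<Rightarrow> 'a \<Rightarrow> complex" where
  "diff_seq b j = (if j \<le> 1 then b j else (\<lambda>x. b j x - b (j - 1) x))"

end

theory Submission
  imports Defs
begin


inductive win :: "'a::metric_space set \<Rightarrow> ('a \<Rightarrow> real) \<Rightarrow> 'a \<Rightarrow> real \<Rightarrow> bool"
  for K g where
  base: "s < 0 \<Longrightarrow> win K g x s"
| step: "(\<forall>\<delta>>0. \<exists>y\<in>K. dist y x < \<delta> \<and> (\<exists>h>0. \<forall>\<delta>'>0. \<exists>z\<in>K. dist z y < \<delta>' \<and>
           g z > g y + h \<and> win K g z (s - (g z - g y)))) \<Longrightarrow> win K g x s"

lemma win_mono: "win K g x s \<Longrightarrow> s' \<le> s \<Longrightarrow> win K g x s'"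
proof (induction arbitrary: s' rule: win.induct)
  case (base s x)
  then show ?case by (auto intro: win.base)
next
  case (step x s)
  note IH = step(1)
  have le: "s' \<le> s" by fact
  show ?case
  proof (rule win.step, intro allI impI)
    fix \<delta> :: real assume d: "\<delta> > 0"
    from IH[rule_format, OF d] obtain y where y: "y\<in>K" and
      yy: "dist y x < \<delta> \<and> (\<exists>h>0. \<forall>\<delta>'>0. \<exists>z\<in>K. dist z y < \<delta>' \<and> g z > g y + h \<and> win K g z (s - (g z - g y)) \<and>
           (\<forall>s''. s'' \<le> s - (g z - g y) \<longrightarrow> win K g z s''))"
      by (elim bexE) (rule that, assumption+)
    from yy obtain h where h: "h > 0" and
      H0: "\<forall>\<delta>'>0. \<exists>z\<in>K. dist z y < \<delta>' \<and> g z > g y + h \<and> win K g z (s - (g z - g y)) \<and>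
           (\<forall>s''. s'' \<le> s - (g z - g y) \<longrightarrow> win K g z s'')" by (elim conjE exE) (rule that, assumption+)
    have yd: "dist y x < \<delta>" using yy by (rule conjunct1)
    note H = H0[rule_format]
    have "\<exists>z\<in>K. dist z y < \<delta>' \<and> g z > g y + h \<and> win K g z (s' - (g z - g y))" if dp: "\<delta>'>0" for \<delta>'
    proof -
      obtain z where z: "z\<in>K" "dist z y < \<delta>'" "g z > g y + h" and
        W: "\<forall>s''. s'' \<le> s - (g z - g y) \<longrightarrow> win K g z s''" using H[OF dp] by (elim bexE conjE) (rule that, assumption+)
      have "win K g z (s' - (g z - g y))" using W le by simp
      then show ?thesis using z by blast
    qed
    then have HH: "\<forall>\<delta>'>0. \<exists>z\<in>K. dist z y < \<delta>' \<and> g z > g y + h \<and> win K g z (s' - (g z - g y))"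
      by blast
    show "\<exists>y\<in>K. dist y x < \<delta> \<and> (\<exists>h>0. \<forall>\<delta>'>0. \<exists>z\<in>K. dist z y < \<delta>' \<and>
           g z > g y + h \<and> win K g z (s' - (g z - g y)))"
      using y yd h HH by blast
  qed
qed

lemma win_limit:
  assumes "s \<ge> 0" "\<And>\<delta>. \<delta> > 0 \<Longrightarrow> \<exists>x'\<in>K. dist x' x < \<delta> \<and> win K g x' s"
  shows "win K g x s"
proof (rule win.step, intro allI impI)
  fix \<delta> :: real assume d: "\<delta> > 0"
  then have d2: "\<delta>/2 > 0" by simp
  from assms(2)[OF d2] obtain x' where x': "x'\<in>K" and x'2: "dist x' x < \<delta>/2 \<and> win K g x' s"
    by (elim bexE) (rule that, assumption+)
  from x'2 have "win K g x' s" by (rule conjunct2)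
  then have "\<forall>\<delta>>0. \<exists>y\<in>K. dist y x' < \<delta> \<and> (\<exists>h>0. \<forall>\<delta>'>0. \<exists>z\<in>K. dist z y < \<delta>' \<and>
           g z > g y + h \<and> win K g z (s - (g z - g y)))"
  proof (cases rule: win.cases)
    case base then show ?thesis using assms(1) by simp
  next
    case step then show ?thesis by assumption
  qed
  from this[rule_format, OF d2] obtain y where y: "y\<in>K" and yy: "dist y x' < \<delta>/2 \<and> (\<exists>h>0. \<forall>\<delta>'>0. \<exists>z\<in>K. dist z y < \<delta>' \<and>
           g z > g y + h \<and> win K g z (s - (g z - g y)))" by (elim bexE) (rule that, assumption+)
  have "dist y x < \<delta>" using conjunct1[OF yy] conjunct1[OF x'2] dist_triangle[of y x x'] by linarith
  then show "\<exists>y\<in>K. dist y x < \<delta> \<and> (\<exists>h>0. \<forall>\<delta>'>0. \<exists>z\<in>K. dist z y < \<delta>' \<and>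
           g z > g y + h \<and> win K g z (s - (g z - g y)))" using y conjunct2[OF yy] by (intro bexI[of _ y] conjI)
qed


definition V :: "'a::metric_space set \<Rightarrow> ('a \<Rightarrow> real) \<Rightarrow> 'a \<Rightarrow> real" where
  "V K g x = Sup {s. win K g x s}"

context
  fixes K :: "'a::metric_space set" and g :: "'a \<Rightarrow> real" and C :: real
  assumes C: "\<forall>x\<in>K. \<not> win K g x C"
begin

lemma win_lt_C: "x\<in>K \<Longrightarrow> win K g x s \<Longrightarrow> s < C"
  using C win_mono[of K g x s C] by force

lemma bdd_win: "x\<in>K \<Longrightarrow> bdd_above {s. win K g x s}"
  using win_lt_C by (auto intro!: bdd_aboveI[of _ C] less_imp_le)

lemma ne_win: "{s. win K g x s} \<noteq> {}"
  using win.base[of "-1" K g x] by auto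

lemma V_ge: "x\<in>K \<Longrightarrow> win K g x s \<Longrightarrow> s \<le> V K g x"
  unfolding V_def by (rule cSup_upper) (auto simp: bdd_win)

lemma V_win: "x\<in>K \<Longrightarrow> s < V K g x \<Longrightarrow> win K g x s"
proof -
  assume x: "x\<in>K" and s: "s < V K g x"
  then obtain s' where "win K g x s'" "s < s'" unfolding V_def using less_cSupD[OF ne_win] by blast
  then show ?thesis using win_mono by (meson less_imp_le)
qed

lemma not_win_V: "x\<in>K \<Longrightarrow> \<not> win K g x s \<Longrightarrow> V K g x \<le> s"
  using V_win by (meson not_less)

lemma V_nonneg: "x\<in>K \<Longrightarrow> 0 \<le> V K g x"
proof (rule ccontr)
  assume x: "x\<in>K" and "\<not> 0 \<le> V K g x"
  then have "V K g x / 2 < 0" by simp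
  then have "win K g x (V K g x / 2)" by (rule win.base)
  then have "V K g x / 2 \<le> V K g x" using V_ge x by blast
  then show False using \<open>\<not> 0 \<le> V K g x\<close> by simp
qed

lemma V_le: "x\<in>K \<Longrightarrow> V K g x \<le> C"
  unfolding V_def by (rule cSup_least[OF ne_win]) (auto dest: win_lt_C intro: less_imp_le)

lemma V_usc:
  assumes x: "x\<in>K" and b: "V K g x < b"
  shows "\<exists>e>0. \<forall>x'\<in>K. dist x' x < e \<longrightarrow> V K g x' < b"
proof -
  define s where "s = (V K g x + b) / 2"
  have s0: "s \<ge> 0" using V_nonneg[OF x] b unfolding s_def by simp
  have "\<not> win K g x s" using V_ge[OF x] b unfolding s_def by force
  then have "\<not> (\<forall>\<delta>. \<delta> > 0 \<longrightarrow> (\<exists>x'\<in>K. dist x' x < \<delta> \<and> win K g x' s))"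
    using win_limit[OF s0, of K x g] by blast
  then obtain e where e: "e > 0" and ne: "\<not> (\<exists>x'\<in>K. dist x' x < e \<and> win K g x' s)" by blast
  have "V K g x' < b" if "x'\<in>K" "dist x' x < e" for x'
  proof -
    have "\<not> win K g x' s" using ne that by blast
    then have "V K g x' \<le> s" using not_win_V that(1) by blast
    then show ?thesis using b unfolding s_def by simp
  qed
  then show ?thesis using e by blast
qed

lemma Vg_usc:
  assumes y: "y\<in>K" and b: "V K g y + g y < b"
  shows "\<exists>e>0. \<forall>z\<in>K. dist z y < e \<longrightarrow> V K g z + g z < b"
proof -
  define \<epsilon> where "\<epsilon> = b - V K g y - g y"
  have \<epsilon>: "\<epsilon> > 0" using b unfolding \<epsilon>_def by simp
  define s where "s = V K g y + \<epsilon>/4"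
  have "\<not> win K g y s" using V_ge[OF y] \<epsilon> unfolding s_def by force
  then have "\<not> (\<forall>\<delta>>0. \<exists>y'\<in>K. dist y' y < \<delta> \<and> (\<exists>h>0. \<forall>\<delta>'>0. \<exists>z\<in>K. dist z y' < \<delta>' \<and>
           g z > g y' + h \<and> win K g z (s - (g z - g y'))))"
    using win.step[where x=y and s=s and K=K and g=g] by blast
  then obtain \<delta> where "\<delta> > 0" and
    nd: "\<not> (\<exists>y'\<in>K. dist y' y < \<delta> \<and> (\<exists>h>0. \<forall>\<delta>'>0. \<exists>z\<in>K. dist z y' < \<delta>' \<and>
           g z > g y' + h \<and> win K g z (s - (g z - g y'))))" by blast
  then have "\<not> (\<exists>h>0. \<forall>\<delta>'>0. \<exists>z\<in>K. dist z y < \<delta>' \<and>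
           g z > g y + h \<and> win K g z (s - (g z - g y)))" using y by auto
  then have "\<not> (\<forall>\<delta>'>0. \<exists>z\<in>K. dist z y < \<delta>' \<and>
           g z > g y + \<epsilon>/4 \<and> win K g z (s - (g z - g y)))" using \<epsilon> by simp
  then obtain e1 where e1: "e1 > 0" and
    ne1: "\<not> (\<exists>z\<in>K. dist z y < e1 \<and> g z > g y + \<epsilon>/4 \<and> win K g z (s - (g z - g y)))" by blast
  obtain e2 where e2: "e2 > 0" and ne2: "\<forall>x'\<in>K. dist x' y < e2 \<longrightarrow> V K g x' < V K g y + \<epsilon>/2"
    using V_usc[OF y, of "V K g y + \<epsilon>/2"] \<epsilon> by auto
  have "V K g z + g z < b" if z: "z\<in>K" "dist z y < min e1 e2" for z
  proof (cases "g z > g y + \<epsilon>/4")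
    case True
    then have "\<not> win K g z (s - (g z - g y))" using ne1 z by auto
    then have "V K g z \<le> s - (g z - g y)" using not_win_V z(1) by blast
    then have "V K g z + g z \<le> V K g y + g y + \<epsilon>/4" unfolding s_def by simp
    moreover have "V K g y + g y + \<epsilon> = b" unfolding \<epsilon>_def by simp
    ultimately show ?thesis using \<epsilon> by linarith
  next
    case False
    have "V K g z < V K g y + \<epsilon>/2" using ne2 z by auto
    moreover have "V K g y + g y + \<epsilon> = b" unfolding \<epsilon>_def by simp
    ultimately show ?thesis using False \<epsilon> by linarith
  qed
  then show ?thesis using e1 e2 by (intro exI[of _ "min e1 e2"]) auto
qed

lemma lsc_negV: "lsc_on K (\<lambda>x. - V K g x)"
  unfolding lsc_on_def openin_euclidean_subtopology_iff
proof (intro allI conjI ballI)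
  fix a x assume "x \<in> {x \<in> K. - V K g x > a}"
  then have x: "x\<in>K" "V K g x < -a" by auto
  then obtain e where "e>0" "\<forall>x'\<in>K. dist x' x < e \<longrightarrow> V K g x' < -a" using V_usc by blast
  then show "\<exists>e>0. \<forall>x'\<in>K. dist x' x < e \<longrightarrow> x' \<in> {x \<in> K. - V K g x > a}"
    by (intro exI[of _ e]) force
qed auto

lemma lsc_negVg: "lsc_on K (\<lambda>x. - (V K g x + g x))"
  unfolding lsc_on_def openin_euclidean_subtopology_iff
proof (intro allI conjI ballI)
  fix a x assume "x \<in> {x \<in> K. - (V K g x + g x) > a}"
  then have x: "x\<in>K" "V K g x + g x < -a" by auto
  then obtain e where "e>0" "\<forall>x'\<in>K. dist x' x < e \<longrightarrow> V K g x' + g x' < -a" using Vg_usc by blast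
  then show "\<exists>e>0. \<forall>x'\<in>K. dist x' x < e \<longrightarrow> x' \<in> {x \<in> K. - (V K g x + g x) > a}"
    by (intro exI[of _ e]) force
qed auto

lemma bdd_negV: "bounded ((\<lambda>x. - V K g x) ` K)"
  unfolding bounded_iff using V_nonneg V_le by (intro exI[of _ C]) auto

lemma bdd_negVg: "\<forall>x\<in>K. \<bar>g x\<bar> \<le> B \<Longrightarrow> bounded ((\<lambda>x. - (V K g x + g x)) ` K)"
  unfolding bounded_iff
proof (intro exI[of _ "C + B"] ballI)
  fix u assume gb: "\<forall>x\<in>K. \<bar>g x\<bar> \<le> B" and "u \<in> (\<lambda>x. - (V K g x + g x)) ` K"
  then obtain x where x: "x\<in>K" "u = - (V K g x + g x)" by blast
  have "0 \<le> V K g x" "V K g x \<le> C" "\<bar>g x\<bar> \<le> B" using V_nonneg V_le gb x by auto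
  then show "norm u \<le> C + B" using x by (simp add: abs_le_iff)
qed

end

lemma notD:
  fixes K :: "'a::metric_space set" and f :: "'a \<Rightarrow> complex"
  assumes nD: "f \<notin> D_K K" and B: "\<forall>x\<in>K. norm (f x) \<le> B"
  shows "\<exists>c. norm c = 1 \<and> (\<forall>M. \<exists>x\<in>K. win K (\<lambda>x. Re (c * f x)) x M)"
proof (rule ccontr)
  assume "\<not> ?thesis"
  then have A: "\<forall>c. norm c = 1 \<longrightarrow> \<not> (\<forall>M. \<exists>x\<in>K. win K (\<lambda>x. Re (c * f x)) x M)" by blast
  have "norm (1::complex) = 1" "norm (- \<i>) = 1" by simp_all
  then have "\<not> (\<forall>M. \<exists>x\<in>K. win K (\<lambda>x. Re (1 * f x)) x M)"
    and "\<not> (\<forall>M. \<exists>x\<in>K. win K (\<lambda>x. Re (- \<i> * f x)) x M)" using A[rule_format] by blast+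
  then obtain C1 C2 where C1: "\<forall>x\<in>K. \<not> win K (\<lambda>x. Re (1 * f x)) x C1"
    and C2: "\<forall>x\<in>K. \<not> win K (\<lambda>x. Re (- \<i> * f x)) x C2" by blast
  define g1 where "g1 = (\<lambda>x. Re (1 * f x))"
  define g2 where "g2 = (\<lambda>x. Re (- \<i> * f x))"
  have gb1: "\<forall>x\<in>K. \<bar>g1 x\<bar> \<le> B" using B abs_Re_le_cmod order_trans unfolding g1_def by fastforce
  have gb2: "\<forall>x\<in>K. \<bar>g2 x\<bar> \<le> B" using B abs_Im_le_cmod order_trans unfolding g2_def by fastforce
  have "f \<in> D_K K"
    unfolding D_K_def
  proof (intro CollectI exI conjI)
    show "lsc_on K (\<lambda>x. - V K g1 x)" using lsc_negV C1 unfolding g1_def by blast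
    show "lsc_on K (\<lambda>x. - (V K g1 x + g1 x))" using lsc_negVg C1 unfolding g1_def by blast
    show "lsc_on K (\<lambda>x. - V K g2 x)" using lsc_negV C2 unfolding g2_def by blast
    show "lsc_on K (\<lambda>x. - (V K g2 x + g2 x))" using lsc_negVg C2 unfolding g2_def by blast
    show "bounded ((\<lambda>x. - V K g1 x) ` K)" using bdd_negV C1 unfolding g1_def by blast
    show "bounded ((\<lambda>x. - (V K g1 x + g1 x)) ` K)" using bdd_negVg C1 gb1 unfolding g1_def by blast
    show "bounded ((\<lambda>x. - V K g2 x) ` K)" using bdd_negV C2 unfolding g2_def by blast
    show "bounded ((\<lambda>x. - (V K g2 x + g2 x)) ` K)" using bdd_negVg C2 gb2 unfolding g2_def by blast
    show "\<forall>x\<in>K. f x = complex_of_real (- V K g1 x - - (V K g1 x + g1 x)) +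
       \<i> * complex_of_real (- V K g2 x - - (V K g2 x + g2 x))"
      unfolding g1_def g2_def by (simp add: complex_eq_iff)
  qed
  with nD show False by blast
qed


datatype wt = Lf | Nd "real \<Rightarrow> real \<Rightarrow> wt"

inductive wint :: "'a::metric_space set \<Rightarrow> ('a \<Rightarrow> real) \<Rightarrow> 'a \<Rightarrow> real \<Rightarrow> wt \<Rightarrow> bool"
  for K g where
  wbase: "s < 0 \<Longrightarrow> wint K g x s Lf"
| wstep: "(\<forall>\<delta>>0. \<exists>y\<in>K. dist y x < \<delta> \<and> (\<exists>h>0. \<forall>\<delta>'>0. \<exists>z\<in>K. dist z y < \<delta>' \<and>
           g z > g y + h \<and> wint K g z (s - (g z - g y)) (C \<delta> \<delta>'))) \<Longrightarrow> wint K g x s (Nd C)"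

lemma choice_inner:
  assumes "\<forall>\<delta>'>(0::real). \<exists>z\<in>K. A \<delta>' z \<and> (\<exists>T. P z T)"
  shows "\<exists>C'. \<forall>\<delta>'>0. \<exists>z\<in>K. A \<delta>' z \<and> P z (C' \<delta>')"
proof -
  have "\<forall>\<delta>'::real. \<exists>T. \<delta>' > 0 \<longrightarrow> (\<exists>z\<in>K. A \<delta>' z \<and> P z T)" using assms by blast
  then show ?thesis by (rule choice[THEN exE]) blast
qed

lemma choice_tree:
  fixes g :: "'a::metric_space \<Rightarrow> real"
  assumes "\<forall>\<delta>>0. \<exists>y\<in>K. dist y x < \<delta> \<and> (\<exists>h>0. \<forall>\<delta>'>0. \<exists>z\<in>K. dist z y < \<delta>' \<and>
           g z > g y + h \<and> (\<exists>T. P z (s - (g z - g y)) T))"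
  shows "\<exists>C. \<forall>\<delta>>0. \<exists>y\<in>K. dist y x < \<delta> \<and> (\<exists>h>0. \<forall>\<delta>'>0. \<exists>z\<in>K. dist z y < \<delta>' \<and>
           g z > g y + h \<and> P z (s - (g z - g y)) (C \<delta> \<delta>'))"
proof -
  have "\<forall>\<delta>. \<exists>C'. \<delta> > 0 \<longrightarrow> (\<exists>y\<in>K. dist y x < \<delta> \<and> (\<exists>h>0. \<forall>\<delta>'>0. \<exists>z\<in>K. dist z y < \<delta>' \<and>
           g z > g y + h \<and> P z (s - (g z - g y)) (C' \<delta>')))"
  proof
    fix \<delta> :: real
    show "\<exists>C'. \<delta> > 0 \<longrightarrow> (\<exists>y\<in>K. dist y x < \<delta> \<and> (\<exists>h>0. \<forall>\<delta>'>0. \<exists>z\<in>K. dist z y < \<delta>' \<and>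
           g z > g y + h \<and> P z (s - (g z - g y)) (C' \<delta>')))"
    proof (cases "\<delta> > 0")
      case True
      from assms[rule_format, OF True] obtain y where y: "y\<in>K" and
        yy: "dist y x < \<delta> \<and> (\<exists>h>0. \<forall>\<delta>'>0. \<exists>z\<in>K. dist z y < \<delta>' \<and>
           g z > g y + h \<and> (\<exists>T. P z (s - (g z - g y)) T))" by (elim bexE) (rule that, assumption+)
      from conjunct2[OF yy] obtain h where h: "h > 0" and
        hh: "\<forall>\<delta>'>0. \<exists>z\<in>K. (dist z y < \<delta>' \<and> g z > g y + h) \<and> (\<exists>T. P z (s - (g z - g y)) T)"
        by (elim exE conjE) (rule that, assumption, simp)
      from choice_inner[OF hh] obtain C' where
        C': "\<forall>\<delta>'>0. \<exists>z\<in>K. (dist z y < \<delta>' \<and> g z > g y + h) \<and> P z (s - (g z - g y)) (C' \<delta>')"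
        by (elim exE) (rule that)
      show ?thesis
        by (rule exI[of _ C'], intro impI bexI[OF _ y] conjI conjunct1[OF yy] exI[of _ h]) (use h C' in auto)
    qed simp
  qed
  then show ?thesis by (rule choice[THEN exE]) (rule exI, assumption)
qed

lemma win_wint: "win K g x s \<Longrightarrow> \<exists>T. wint K g x s T"
proof (induction rule: win.induct)
  case (base s x)
  then show ?case by (blast intro: wint.wbase)
next
  case (step x s)
  have "\<forall>\<delta>>0. \<exists>y\<in>K. dist y x < \<delta> \<and> (\<exists>h>0. \<forall>\<delta>'>0. \<exists>z\<in>K. dist z y < \<delta>' \<and>
           g z > g y + h \<and> (\<exists>T. wint K g z (s - (g z - g y)) T))"
  proof (intro allI impI)
    fix \<delta> :: real assume d: "\<delta> > 0"
    from step[rule_format, OF d] obtain y where y: "y\<in>K" and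
      yy: "dist y x < \<delta> \<and> (\<exists>h>0. \<forall>\<delta>'>0. \<exists>z\<in>K. dist z y < \<delta>' \<and>
           g z > g y + h \<and> (win K g z (s - (g z - g y)) \<and> (\<exists>T. wint K g z (s - (g z - g y)) T)))"
      by (elim bexE) (rule that, assumption+)
    from conjunct2[OF yy] obtain h where h: "h > 0" and
      hh: "\<forall>\<delta>'>0. \<exists>z\<in>K. dist z y < \<delta>' \<and>
           g z > g y + h \<and> (win K g z (s - (g z - g y)) \<and> (\<exists>T. wint K g z (s - (g z - g y)) T))"
      by (elim exE conjE) (rule that, assumption+)
    have "\<forall>\<delta>'>0. \<exists>z\<in>K. dist z y < \<delta>' \<and>
           g z > g y + h \<and> (\<exists>T. wint K g z (s - (g z - g y)) T)"
    proof (intro allI impI)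
      fix \<delta>' :: real assume "\<delta>' > 0"
      from hh[rule_format, OF this] obtain z where "z\<in>K" and
        zz: "dist z y < \<delta>' \<and> g z > g y + h \<and> (win K g z (s - (g z - g y)) \<and> (\<exists>T. wint K g z (s - (g z - g y)) T))"
        by (elim bexE) (rule that, assumption+)
      then show "\<exists>z\<in>K. dist z y < \<delta>' \<and> g z > g y + h \<and> (\<exists>T. wint K g z (s - (g z - g y)) T)"
        by (intro bexI[of _ z]) auto
    qed
    then show "\<exists>y\<in>K. dist y x < \<delta> \<and> (\<exists>h>0. \<forall>\<delta>'>0. \<exists>z\<in>K. dist z y < \<delta>' \<and>
           g z > g y + h \<and> (\<exists>T. wint K g z (s - (g z - g y)) T))"
      using y conjunct1[OF yy] h by (intro bexI[of _ y] conjI exI[of _ h]) auto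
  qed
  from choice_tree[OF this] obtain C where "\<forall>\<delta>>0. \<exists>y\<in>K. dist y x < \<delta> \<and> (\<exists>h>0. \<forall>\<delta>'>0. \<exists>z\<in>K. dist z y < \<delta>' \<and>
           g z > g y + h \<and> wint K g z (s - (g z - g y)) (C \<delta> \<delta>'))" by (elim exE) (rule that)
  then show ?case by (intro exI[of _ "Nd C"] wint.wstep)
qed



lemma geo_block: "(\<Sum>n\<in>{Suc i..<Suc i + d}. (1/2::real)^n) = (1/2)^i - (1/2)^(i+d)"
proof (induction d)
  case 0 then show ?case by simp
next
  case (Suc d)
  have "{Suc i..<Suc i + Suc d} = insert (Suc i + d) {Suc i..<Suc i + d}" by auto
  then have "(\<Sum>n\<in>{Suc i..<Suc i + Suc d}. (1/2::real)^n) = (1/2)^(Suc i + d) + (\<Sum>n\<in>{Suc i..<Suc i + d}. (1/2::real)^n)"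
    by simp
  also have "\<dots> = (1/2)^i - (1/2)^(i + Suc d)" using Suc by (simp add: power_add)
  finally show ?case .
qed

lemma geo_bound:
  assumes "finite A" "\<forall>n\<in>A. i < n"
  shows "(\<Sum>n\<in>A. (1/2::real)^n) \<le> (1/2)^i"
proof -
  define d where "d = Max (insert (Suc i) A)"
  have "A \<subseteq> {Suc i..<Suc i + d}"
  proof
    fix n assume "n \<in> A"
    then have "n \<le> d" unfolding d_def using assms(1) by simp
    then show "n \<in> {Suc i..<Suc i + d}" using assms(2) \<open>n\<in>A\<close> by auto
  qed
  then have "(\<Sum>n\<in>A. (1/2::real)^n) \<le> (\<Sum>n\<in>{Suc i..<Suc i + d}. (1/2::real)^n)"
    by (intro sum_mono2) auto
  also have "\<dots> \<le> (1/2)^i" unfolding geo_block by simp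
  finally show ?thesis .
qed

primrec pre :: "(nat \<Rightarrow> (nat \<Rightarrow> 'b) \<Rightarrow> 'b \<Rightarrow> bool) \<Rightarrow> nat \<Rightarrow> 'b list" where
  "pre P 0 = []"
| "pre P (Suc n) = pre P n @ [SOME N. P n (\<lambda>i. pre P n ! i) N]"

lemma length_pre: "length (pre P n) = n"
  by (induction n) auto

lemma pre_nth: "i < n \<Longrightarrow> pre P n ! i = pre P (Suc i) ! i"
proof (induction n)
  case 0 then show ?case by simp
next
  case (Suc n)
  show ?case
  proof (cases "i < n")
    case True
    then have "pre P (Suc n) ! i = pre P n ! i" by (simp add: nth_append length_pre)
    then show ?thesis using Suc True by simp
  next
    case False
    then have "i = n" using Suc by simp
    then show ?thesis by simp
  qed
qed

lemma dep_choice: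
  assumes ex: "\<And>n (r::nat\<Rightarrow>'b). \<exists>N. P n r N"
    and cong: "\<And>n r r' N. (\<And>i. i<n \<Longrightarrow> r i = r' i) \<Longrightarrow> P n r N = P n r' N"
  shows "\<exists>r. \<forall>n. P n r (r n)"
proof -
  define r where "r = (\<lambda>n. pre P (Suc n) ! n)"
  have rn: "r n = (SOME N. P n (\<lambda>i. pre P n ! i) N)" for n
    unfolding r_def by (simp add: nth_append length_pre)
  have "P n r (r n)" for n
  proof -
    have "P n (\<lambda>i. pre P n ! i) (r n)" unfolding rn by (rule someI_ex[OF ex])
    moreover have "P n (\<lambda>i. pre P n ! i) (r n) = P n r (r n)"
      by (rule cong) (simp add: r_def pre_nth)
    ultimately show ?thesis by simp
  qed
  then show ?thesis by blast
qed

lemma unif_fin: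
  fixes K :: "'a::metric_space set" and G :: "nat \<Rightarrow> 'a \<Rightarrow> complex"
  assumes K: "compact K" and G: "\<And>i. continuous_on K (G i)" and e: "e > 0"
  shows "\<exists>d>0. \<forall>i<n. \<forall>x\<in>K. \<forall>y\<in>K. dist x y < d \<longrightarrow> norm (G i x - G i y) < e"
proof (induction n)
  case 0 then show ?case by (intro exI[of _ 1]) auto
next
  case (Suc n)
  then obtain d1 where d1: "d1 > 0" "\<forall>i<n. \<forall>x\<in>K. \<forall>y\<in>K. dist x y < d1 \<longrightarrow> norm (G i x - G i y) < e"
    by blast
  have "uniformly_continuous_on K (G n)" using compact_uniformly_continuous[OF G K] .
  then obtain d2 where d2: "d2 > 0" "\<forall>x\<in>K. \<forall>x'\<in>K. dist x' x < d2 \<longrightarrow> dist (G n x') (G n x) < e"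
    unfolding uniformly_continuous_on_def using e by blast
  show ?case
  proof (intro exI[of _ "min d1 d2"] conjI allI impI ballI)
    show "min d1 d2 > 0" using d1 d2 by simp
    fix i x y assume i: "i < Suc n" and x: "x\<in>K" and y: "y\<in>K" and dxy: "dist x y < min d1 d2"
    show "norm (G i x - G i y) < e"
    proof (cases "i < n")
      case True then show ?thesis using d1 x y dxy by auto
    next
      case False
      then have "i = n" using i by simp
      then show ?thesis using d2(2) x y dxy by (auto simp: dist_norm)
    qed
  qed
qed



datatype 'a st = St (pt: 'a) (res: real) (tr: wt) (mu: real) (hm: real) (dd: real)

locale cons =
  fixes K :: "'a::metric_space set" and F :: "nat \<Rightarrow> 'a \<Rightarrow> complex" and Ff :: "'a \<Rightarrow> complex"
    and k0 :: real and M :: real and x0 :: 'a and T0 :: wt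
  assumes cK: "compact K" and cF: "\<And>n. continuous_on K (F n)"
    and conv: "\<And>x. x\<in>K \<Longrightarrow> (\<lambda>n. F n x) \<longlonglongrightarrow> Ff x"
    and k0: "0 < k0" "k0 \<le> 1/100"
    and x0: "x0 \<in> K" and T0: "wint K (\<lambda>x. Re (Ff x)) x0 (M+1) T0"
begin

definition g :: "'a \<Rightarrow> real" where "g = (\<lambda>x. Re (Ff x))"

lemma T0': "wint K g x0 (M+1) T0" using T0 unfolding g_def .

definition dl :: "(nat \<Rightarrow> nat) \<Rightarrow> nat \<Rightarrow> real \<Rightarrow> real" where
  "dl r n \<mu> = (SOME d. d > 0 \<and> (\<forall>i<n. \<forall>x\<in>K. \<forall>y\<in>K. dist x y < d \<longrightarrow> norm (F (r i) x - F (r i) y) < \<mu> * k0 / 2^n))"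

lemma dl_ex: "\<mu> > 0 \<Longrightarrow> \<exists>d. d > 0 \<and> (\<forall>i<n. \<forall>x\<in>K. \<forall>y\<in>K. dist x y < d \<longrightarrow> norm (F (r i) x - F (r i) y) < \<mu> * k0 / 2^n)"
  using unif_fin[OF cK, of "\<lambda>i. F (r i)" "\<mu> * k0 / 2^n" n] cF k0 by auto

lemma dl_pos: "\<mu> > 0 \<Longrightarrow> dl r n \<mu> > 0"
  using someI_ex[OF dl_ex] unfolding dl_def by blast

lemma dl_close: "\<mu> > 0 \<Longrightarrow> i<n \<Longrightarrow> x\<in>K \<Longrightarrow> y\<in>K \<Longrightarrow> dist x y < dl r n \<mu> \<Longrightarrow> norm (F (r i) x - F (r i) y) < \<mu> * k0 / 2^n"
  using someI_ex[OF dl_ex, of \<mu> n r] unfolding dl_def by blast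

lemma dl_cong: "(\<And>i. i<n \<Longrightarrow> r i = r' i) \<Longrightarrow> dl r n \<mu> = dl r' n \<mu>"
proof -
  assume a: "\<And>i. i<n \<Longrightarrow> r i = r' i"
  have "(\<lambda>d. d > 0 \<and> (\<forall>i<n. \<forall>x\<in>K. \<forall>y\<in>K. dist x y < d \<longrightarrow> norm (F (r i) x - F (r i) y) < \<mu> * k0 / 2^n))
      = (\<lambda>d. d > 0 \<and> (\<forall>i<n. \<forall>x\<in>K. \<forall>y\<in>K. dist x y < d \<longrightarrow> norm (F (r' i) x - F (r' i) y) < \<mu> * k0 / 2^n))"
    using a by (intro ext) auto
  then show ?thesis unfolding dl_def by simp
qed

definition PY :: "'a st \<Rightarrow> (real \<Rightarrow> real \<Rightarrow> wt) \<Rightarrow> real \<Rightarrow> 'a \<Rightarrow> real \<Rightarrow> bool" where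
  "PY st C d y h \<longleftrightarrow> y\<in>K \<and> dist y (pt st) < d \<and> h > 0 \<and>
     (\<forall>\<delta>'>0. \<exists>z\<in>K. dist z y < \<delta>' \<and> g z > g y + h \<and> wint K g z (res st - (g z - g y)) (C d \<delta>'))"

definition PZ :: "'a st \<Rightarrow> (real \<Rightarrow> real \<Rightarrow> wt) \<Rightarrow> real \<Rightarrow> 'a \<Rightarrow> bool" where
  "PZ st C d' z \<longleftrightarrow> z\<in>K \<and> dist z (pt st) < d' \<and> g z > g (pt st) + hm st \<and>
     wint K g z (res st - (g z - g (pt st))) (C (dd st) d')"

definition stepY :: "'a st \<Rightarrow> (real \<Rightarrow> real \<Rightarrow> wt) \<Rightarrow> real \<Rightarrow> 'a st" where
  "stepY st C d = (if \<exists>p. PY st C d (fst p) (snd p) then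
     (let p = SOME p. PY st C d (fst p) (snd p) in St (fst p) (res st) (tr st) (min (mu st) (snd p)) (snd p) d)
     else st)"

definition stepZ :: "'a st \<Rightarrow> (real \<Rightarrow> real \<Rightarrow> wt) \<Rightarrow> real \<Rightarrow> 'a st" where
  "stepZ st C d' = (if \<exists>z. PZ st C d' z then
     (let z = SOME z. PZ st C d' z in St z (res st - (g z - g (pt st))) (C (dd st) d') (mu st) 1 d')
     else st)"

definition stepf :: "(nat \<Rightarrow> nat) \<Rightarrow> nat \<Rightarrow> 'a st \<Rightarrow> nat \<Rightarrow> 'a st" where
  "stepf r n st j = (case tr st of Lf \<Rightarrow> st | Nd C \<Rightarrow>
     (if even j then stepY st C (dl r n (mu st)) else stepZ st C (dl r n (mu st))))"

definition st0 :: "'a st" where "st0 = St x0 (M+1) T0 1 1 1"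

fun nodeR :: "(nat \<Rightarrow> nat) \<Rightarrow> nat list \<Rightarrow> 'a st" where
  "nodeR r [] = st0"
| "nodeR r (n # L) = stepf r n (nodeR r L) (length L)"

primrec bst :: "(nat \<Rightarrow> nat) \<Rightarrow> (nat \<Rightarrow> nat) \<Rightarrow> nat \<Rightarrow> 'a st" where
  "bst r m 0 = st0"
| "bst r m (Suc j) = stepf r (m (Suc j)) (bst r m j) j"

lemma stepY_inv:
  assumes "pt st \<in> K" "0 < mu st" "d > 0"
  shows "pt (stepY st C d) \<in> K \<and> 0 < mu (stepY st C d) \<and> mu (stepY st C d) \<le> mu st \<and>
    (pt (stepY st C d) = pt st \<or> dist (pt (stepY st C d)) (pt st) < d)"
proof (cases "\<exists>p. PY st C d (fst p) (snd p)")
  case True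
  define p where "p = (SOME p. PY st C d (fst p) (snd p))"
  have p: "PY st C d (fst p) (snd p)" unfolding p_def using someI_ex[OF True] .
  have e: "stepY st C d = St (fst p) (res st) (tr st) (min (mu st) (snd p)) (snd p) d"
    unfolding stepY_def p_def using True by (simp add: Let_def)
  show ?thesis using p assms unfolding e PY_def by auto
next
  case False
  then show ?thesis using assms unfolding stepY_def by auto
qed

lemma stepZ_inv:
  assumes "pt st \<in> K" "0 < mu st" "d > 0"
  shows "pt (stepZ st C d) \<in> K \<and> 0 < mu (stepZ st C d) \<and> mu (stepZ st C d) \<le> mu st \<and>
    (pt (stepZ st C d) = pt st \<or> dist (pt (stepZ st C d)) (pt st) < d)"
proof (cases "\<exists>z. PZ st C d z")
  case True
  define z where "z = (SOME z. PZ st C d z)"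
  have z: "PZ st C d z" unfolding z_def using someI_ex[OF True] .
  have e: "stepZ st C d = St z (res st - (g z - g (pt st))) (C (dd st) d) (mu st) 1 d"
    unfolding stepZ_def z_def using True by (simp add: Let_def)
  show ?thesis using z assms unfolding e PZ_def by auto
next
  case False
  then show ?thesis using assms unfolding stepZ_def by auto
qed

lemma stepf_inv:
  assumes "pt st \<in> K" "0 < mu st"
  shows "pt (stepf r n st j) \<in> K \<and> 0 < mu (stepf r n st j) \<and> mu (stepf r n st j) \<le> mu st \<and>
    (pt (stepf r n st j) = pt st \<or> dist (pt (stepf r n st j)) (pt st) < dl r n (mu st))"
proof (cases "tr st")
  case Lf
  then show ?thesis using assms unfolding stepf_def by simp
next
  case (Nd C)
  have d: "dl r n (mu st) > 0" using dl_pos assms(2) .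
  show ?thesis
    using Nd stepY_inv[OF assms d, of C] stepZ_inv[OF assms d, of C] unfolding stepf_def by auto
qed

lemma nodeR_inv: "pt (nodeR r L) \<in> K \<and> 0 < mu (nodeR r L) \<and> mu (nodeR r L) \<le> 1"
proof (induction L)
  case Nil then show ?case by (simp add: st0_def x0)
next
  case (Cons a L)
  then show ?case using stepf_inv[of "nodeR r L" r a "length L"] by auto
qed

lemma bst_inv: "pt (bst r m j) \<in> K \<and> 0 < mu (bst r m j) \<and> mu (bst r m j) \<le> 1"
proof (induction j)
  case 0 then show ?case by (simp add: st0_def x0)
next
  case (Suc j)
  then show ?case using stepf_inv[of "bst r m j" r "m (Suc j)" j] by auto
qed

lemma bst_nodeR: "bst r m j = nodeR r (rev (map m [1..<Suc j]))"
proof (induction j)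
  case 0 then show ?case by simp
next
  case (Suc j)
  have "[1..<Suc (Suc j)] = [1..<Suc j] @ [Suc j]" by simp
  then have e: "rev (map m [1..<Suc (Suc j)]) = m (Suc j) # rev (map m [1..<Suc j])" by simp
  have "bst r m (Suc j) = stepf r (m (Suc j)) (nodeR r (rev (map m [1..<Suc j]))) (length (rev (map m [1..<Suc j])))"
    using Suc by (simp del: upt_Suc)
  also have "\<dots> = nodeR r (rev (map m [1..<Suc (Suc j)]))" unfolding e by simp
  finally show ?case .
qed

lemma stepf_cong: "(\<And>i. i<n \<Longrightarrow> r i = r' i) \<Longrightarrow> stepf r n st j = stepf r' n st j"
proof -
  assume "\<And>i. i<n \<Longrightarrow> r i = r' i"
  then have e: "\<And>\<mu>. dl r n \<mu> = dl r' n \<mu>" using dl_cong[of n r r'] by blast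
  show ?thesis unfolding stepf_def e ..
qed

lemma nodeR_cong: "(\<And>i. i<n \<Longrightarrow> r i = r' i) \<Longrightarrow> set L \<subseteq> {..n} \<Longrightarrow> nodeR r L = nodeR r' L"
proof (induction L)
  case Nil then show ?case by simp
next
  case (Cons a L)
  then have "nodeR r L = nodeR r' L" by simp
  moreover have "stepf r a st j = stepf r' a st j" for st j
    using Cons.prems by (intro stepf_cong) auto
  ultimately show ?case by simp
qed

definition Lists :: "nat \<Rightarrow> nat list set" where
  "Lists n = {L. set L \<subseteq> {..n} \<and> length L \<le> Suc n}"

lemma finite_Lists: "finite (Lists n)"
  unfolding Lists_def by (rule finite_lists_length_le) simp

definition goodP :: "nat \<Rightarrow> (nat \<Rightarrow> nat) \<Rightarrow> nat \<Rightarrow> bool" where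
  "goodP n r N \<longleftrightarrow> (0 < n \<longrightarrow> r (n-1) < N) \<and>
     (\<forall>L\<in>Lists n. norm (F N (pt (nodeR r L)) - Ff (pt (nodeR r L))) < mu (nodeR r L) * k0 / 2^n)"

lemma goodP_ex: "\<exists>N. goodP n r N"
proof -
  have ev: "\<forall>L\<in>Lists n. eventually (\<lambda>N. norm (F N (pt (nodeR r L)) - Ff (pt (nodeR r L))) < mu (nodeR r L) * k0 / 2^n) sequentially"
  proof
    fix L
    have p: "pt (nodeR r L) \<in> K" and mp: "0 < mu (nodeR r L)" using nodeR_inv by auto
    have "mu (nodeR r L) * k0 / 2^n > 0" using mp k0 by simp
    from tendstoD[OF conv[OF p] this]
    show "eventually (\<lambda>N. norm (F N (pt (nodeR r L)) - Ff (pt (nodeR r L))) < mu (nodeR r L) * k0 / 2^n) sequentially"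
      by (simp add: dist_norm)
  qed
  have "eventually (\<lambda>N. r (n-1) < N \<and> (\<forall>L\<in>Lists n. norm (F N (pt (nodeR r L)) - Ff (pt (nodeR r L))) < mu (nodeR r L) * k0 / 2^n)) sequentially"
    using eventually_ball_finite[OF finite_Lists ev] eventually_gt_at_top[of "r (n-1)"]
    by (auto intro: eventually_conj)
  then obtain N0 where "\<forall>N\<ge>N0. r (n-1) < N \<and> (\<forall>L\<in>Lists n. norm (F N (pt (nodeR r L)) - Ff (pt (nodeR r L))) < mu (nodeR r L) * k0 / 2^n)"
    unfolding eventually_sequentially by blast
  then show ?thesis unfolding goodP_def by blast
qed

lemma goodP_cong: "(\<And>i. i<n \<Longrightarrow> r i = r' i) \<Longrightarrow> goodP n r N = goodP n r' N"
proof -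
  assume a: "\<And>i. i<n \<Longrightarrow> r i = r' i"
  have "nodeR r L = nodeR r' L" if "L \<in> Lists n" for L
    using a that unfolding Lists_def by (intro nodeR_cong[of n]) auto
  moreover have "0 < n \<longrightarrow> r (n-1) = r' (n-1)" using a by simp
  ultimately show ?thesis unfolding goodP_def by auto
qed

lemma good_r: "\<exists>r. \<forall>n. goodP n r (r n)"
  by (rule dep_choice[OF goodP_ex goodP_cong])

lemma wint_Lf: "wint K g x s Lf \<Longrightarrow> s < 0"
  by (cases rule: wint.cases) auto

lemma wint_Nd: "wint K g x s (Nd C) \<Longrightarrow> \<forall>\<delta>>0. \<exists>y\<in>K. dist y x < \<delta> \<and> (\<exists>h>0. \<forall>\<delta>'>0. \<exists>z\<in>K. dist z y < \<delta>' \<and>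
           g z > g y + h \<and> wint K g z (s - (g z - g y)) (C \<delta> \<delta>'))"
  by (cases rule: wint.cases) auto

lemma stepY_ok: "\<exists>p. PY st C d (fst p) (snd p) \<Longrightarrow>
  \<exists>y h. PY st C d y h \<and> stepY st C d = St y (res st) (tr st) (min (mu st) h) h d"
proof -
  assume a: "\<exists>p. PY st C d (fst p) (snd p)"
  define p where "p = (SOME p. PY st C d (fst p) (snd p))"
  have p: "PY st C d (fst p) (snd p)" unfolding p_def using someI_ex[OF a] .
  have e: "stepY st C d = St (fst p) (res st) (tr st) (min (mu st) (snd p)) (snd p) d"
    unfolding stepY_def p_def using a by (simp add: Let_def)
  show ?thesis using p e by blast
qed

lemma stepZ_ok: "\<exists>z. PZ st C d z \<Longrightarrow>
  \<exists>z. PZ st C d z \<and> stepZ st C d = St z (res st - (g z - g (pt st))) (C (dd st) d) (mu st) 1 d"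
proof -
  assume a: "\<exists>z. PZ st C d z"
  define z where "z = (SOME z. PZ st C d z)"
  have z: "PZ st C d z" unfolding z_def using someI_ex[OF a] .
  have e: "stepZ st C d = St z (res st - (g z - g (pt st))) (C (dd st) d) (mu st) 1 d"
    unfolding stepZ_def z_def using a by (simp add: Let_def)
  show ?thesis using z e by blast
qed

definition Yinv :: "'a st \<Rightarrow> bool" where
  "Yinv st \<longleftrightarrow> (\<exists>C. tr st = Nd C \<and> hm st > 0 \<and> mu st \<le> hm st \<and>
     (\<forall>\<delta>'>0. \<exists>z\<in>K. dist z (pt st) < \<delta>' \<and> g z > g (pt st) + hm st \<and>
        wint K g z (res st - (g z - g (pt st))) (C (dd st) \<delta>')))"

lemma even_step:
  assumes W: "wint K g (pt st) (res st) (tr st)" and ev: "even j" and mp: "0 < mu st"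
  shows "(tr (stepf r n st j) = Lf \<and> stepf r n st j = st) \<or>
    (Yinv (stepf r n st j) \<and> res (stepf r n st j) = res st \<and> tr (stepf r n st j) = tr st)"
proof (cases "tr st")
  case Lf
  then show ?thesis unfolding stepf_def by simp
next
  case (Nd C)
  define d where "d = dl r n (mu st)"
  have d: "d > 0" unfolding d_def using dl_pos[OF mp] .
  have e: "stepf r n st j = stepY st C d" unfolding stepf_def d_def using Nd ev by simp
  from wint_Nd[OF W[unfolded Nd], rule_format, OF d] obtain y where y: "y\<in>K" and
    yy: "dist y (pt st) < d \<and> (\<exists>h>0. \<forall>\<delta>'>0. \<exists>z\<in>K. dist z y < \<delta>' \<and>
           g z > g y + h \<and> wint K g z (res st - (g z - g y)) (C d \<delta>'))"
    by (elim bexE) (rule that, assumption+)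
  from conjunct2[OF yy] obtain h where h: "h > 0" and
    hh: "\<forall>\<delta>'>0. \<exists>z\<in>K. dist z y < \<delta>' \<and> g z > g y + h \<and> wint K g z (res st - (g z - g y)) (C d \<delta>')"
    by (elim exE conjE) (rule that, assumption+)
  have "PY st C d y h" unfolding PY_def using y conjunct1[OF yy] h hh by blast
  then have "\<exists>p. PY st C d (fst p) (snd p)" by (intro exI[of _ "(y,h)"]) simp
  from stepY_ok[OF this] obtain y' h' where P: "PY st C d y' h'" and
    e2: "stepY st C d = St y' (res st) (tr st) (min (mu st) h') h' d" by blast
  have "Yinv (stepf r n st j)" unfolding e e2 Yinv_def using P Nd unfolding PY_def by auto
  moreover have "res (stepf r n st j) = res st \<and> tr (stepf r n st j) = tr st" unfolding e e2 by simp
  ultimately show ?thesis by blast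
qed

lemma odd_step:
  assumes Y: "Yinv st" and od: "odd j" and mp: "0 < mu st"
  shows "\<exists>C a b. tr st = Nd C \<and> tr (stepf r n st j) = C a b \<and>
    wint K g (pt (stepf r n st j)) (res (stepf r n st j)) (tr (stepf r n st j)) \<and>
    g (pt (stepf r n st j)) > g (pt st) + hm st \<and>
    res (stepf r n st j) = res st - (g (pt (stepf r n st j)) - g (pt st)) \<and>
    mu (stepf r n st j) = mu st"
proof -
  obtain C where C: "tr st = Nd C" and
    Z: "\<forall>\<delta>'>0. \<exists>z\<in>K. dist z (pt st) < \<delta>' \<and> g z > g (pt st) + hm st \<and>
        wint K g z (res st - (g z - g (pt st))) (C (dd st) \<delta>')" using Y unfolding Yinv_def by blast
  define d where "d = dl r n (mu st)"
  have d: "d > 0" unfolding d_def using dl_pos[OF mp] .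
  have e: "stepf r n st j = stepZ st C d" unfolding stepf_def d_def using C od by simp
  have "\<exists>z. PZ st C d z" using Z d unfolding PZ_def by blast
  from stepZ_ok[OF this] obtain z where P: "PZ st C d z" and
    e2: "stepZ st C d = St z (res st - (g z - g (pt st))) (C (dd st) d) (mu st) 1 d" by blast
  show ?thesis unfolding e e2 using P C unfolding PZ_def by auto
qed

context
  fixes r m :: "nat \<Rightarrow> nat"
  assumes goodr: "\<forall>n. goodP n r (r n)" and m1: "0 < m 1" and mi: "\<And>j. j \<ge> 1 \<Longrightarrow> m j < m (Suc j)"
begin

abbreviation S where "S j \<equiv> bst r m j"

lemma mlt: "1 \<le> a \<Longrightarrow> a < b \<Longrightarrow> m a < m b"
proof (induction b)
  case 0 then show ?case by simp
next
  case (Suc b)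
  show ?case
  proof (cases "a < b")
    case True
    then have "m a < m b" using Suc by simp
    also have "m b < m (Suc b)" using mi True Suc.prems by simp
    finally show ?thesis .
  next
    case False
    then have "a = b" using Suc.prems by simp
    then show ?thesis using mi Suc.prems by simp
  qed
qed

lemma mle: "1 \<le> a \<Longrightarrow> a \<le> b \<Longrightarrow> m a \<le> m b"
  using mlt[of a b] by (cases "a = b") auto

lemma m_ge: "1 \<le> a \<Longrightarrow> a \<le> m a"
proof (induction a)
  case 0 then show ?case by simp
next
  case (Suc a)
  show ?case
  proof (cases "a = 0")
    case True then show ?thesis using m1 by simp
  next
    case False
    then have "a \<le> m a" using Suc by simp
    moreover have "m a < m (Suc a)" using mi False by simp
    ultimately show ?thesis by simp
  qed
qed

lemma mu_pos: "0 < mu (S j)" and mu_le1: "mu (S j) \<le> 1" and pt_K: "pt (S j) \<in> K"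
  using bst_inv[of r m j] by auto

lemma mu_anti_Suc: "mu (S (Suc j)) \<le> mu (S j)"
  using stepf_inv[of "S j" r "m (Suc j)" j] mu_pos pt_K by simp

lemma mu_anti: "j \<le> j' \<Longrightarrow> mu (S j') \<le> mu (S j)"
proof (induction j' rule: dec_induct)
  case base then show ?case by simp
next
  case (step n) then show ?case using mu_anti_Suc[of n] by simp
qed

lemma bst_close:
  assumes "i < m (Suc j)"
  shows "norm (F (r i) (pt (S (Suc j))) - F (r i) (pt (S j))) < mu (S j) * k0 / 2^(m (Suc j))"
proof -
  have pos: "mu (S j) * k0 / 2^(m (Suc j)) > 0" using mu_pos k0 by simp
  from stepf_inv[of "S j" r "m (Suc j)" j] mu_pos pt_K
  have "pt (S (Suc j)) = pt (S j) \<or> dist (pt (S (Suc j))) (pt (S j)) < dl r (m (Suc j)) (mu (S j))" by simp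
  then show ?thesis
  proof
    assume "pt (S (Suc j)) = pt (S j)" then show ?thesis using pos by simp
  next
    assume "dist (pt (S (Suc j))) (pt (S j)) < dl r (m (Suc j)) (mu (S j))"
    then show ?thesis by (rule dl_close[OF mu_pos assms pt_K pt_K])
  qed
qed

lemma Inv: "(even j \<longrightarrow> wint K g (pt (S j)) (res (S j)) (tr (S j))) \<and>
  (odd j \<longrightarrow> (tr (S j) = Lf \<and> wint K g (pt (S j)) (res (S j)) (tr (S j))) \<or> Yinv (S j))"
proof (induction j)
  case 0 then show ?case using T0' by (simp add: st0_def)
next
  case (Suc j)
  show ?case
  proof (cases "even j")
    case True
    then have W: "wint K g (pt (S j)) (res (S j)) (tr (S j))" using Suc by simp
    from even_step[OF W True mu_pos, of r "m (Suc j)"]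
    show ?thesis using True W by auto
  next
    case False
    then have "(tr (S j) = Lf \<and> wint K g (pt (S j)) (res (S j)) (tr (S j))) \<or> Yinv (S j)" using Suc by simp
    then show ?thesis
    proof
      assume a: "tr (S j) = Lf \<and> wint K g (pt (S j)) (res (S j)) (tr (S j))"
      then have e: "S (Suc j) = S j" by (simp add: stepf_def)
      show ?thesis by (simp only: e) (use a False in auto)
    next
      assume Y: "Yinv (S j)"
      from odd_step[OF Y _ mu_pos, of j r "m (Suc j)"] False
      show ?thesis by auto
    qed
  qed
qed

lemma step_pair:
  assumes ev: "even j" and r0: "0 \<le> res (S j)"
  shows "Yinv (S (Suc j)) \<and> res (S (Suc j)) = res (S j) \<and> mu (S (Suc j)) \<le> hm (S (Suc j)) \<and>
    mu (S (Suc (Suc j))) = mu (S (Suc j)) \<and> g (pt (S (Suc (Suc j)))) > g (pt (S (Suc j))) + hm (S (Suc j)) \<and>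
    res (S (Suc (Suc j))) = res (S (Suc j)) - (g (pt (S (Suc (Suc j)))) - g (pt (S (Suc j)))) \<and>
    (\<exists>C a b. tr (S j) = Nd C \<and> tr (S (Suc (Suc j))) = C a b)"
proof -
  have W: "wint K g (pt (S j)) (res (S j)) (tr (S j))" using Inv[of j] ev by simp
  have nL: "tr (S j) \<noteq> Lf"
  proof
    assume "tr (S j) = Lf"
    then have "res (S j) < 0" using W wint_Lf by simp
    then show False using r0 by simp
  qed
  from even_step[OF W ev mu_pos, of r "m (Suc j)"] nL
  have Y: "Yinv (S (Suc j))" and r1: "res (S (Suc j)) = res (S j)" and t1: "tr (S (Suc j)) = tr (S j)"
    by auto
  have od: "odd (Suc j)" using ev by simp
  from odd_step[OF Y od mu_pos, of r "m (Suc (Suc j))"]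
  obtain C a b where C: "tr (S (Suc j)) = Nd C" and
    rest: "tr (S (Suc (Suc j))) = C a b \<and>
    g (pt (S (Suc (Suc j)))) > g (pt (S (Suc j))) + hm (S (Suc j)) \<and>
    res (S (Suc (Suc j))) = res (S (Suc j)) - (g (pt (S (Suc (Suc j)))) - g (pt (S (Suc j)))) \<and>
    mu (S (Suc (Suc j))) = mu (S (Suc j))"
    by (simp only: bst.simps) blast
  have "mu (S (Suc j)) \<le> hm (S (Suc j))" using Y unfolding Yinv_def by blast
  then show ?thesis using Y r1 t1 C rest by auto
qed

lemma term_aux: "tr (S (2*j)) = T \<Longrightarrow> \<exists>k. res (S (2*k)) < 0"
proof (induction T arbitrary: j)
  case Lf
  have "wint K g (pt (S (2*j))) (res (S (2*j))) (tr (S (2*j)))" using Inv[of "2*j"] by simp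
  then have "res (S (2*j)) < 0" using Lf wint_Lf by simp
  then show ?case by blast
next
  case (Nd C)
  show ?case
  proof (cases "res (S (2*j)) < 0")
    case True then show ?thesis by blast
  next
    case False
    then obtain C' a b where "tr (S (2*j)) = Nd C'" "tr (S (Suc (Suc (2*j)))) = C' a b"
      using step_pair[of "2*j"] by auto
    then have "tr (S (2 * Suc j)) = C a b" using Nd.prems by simp
    then show ?thesis using Nd.IH by blast
  qed
qed

definition kk :: nat where "kk = (LEAST k. res (S (2*k)) < 0)"

lemma kk: "res (S (2*kk)) < 0"
  unfolding kk_def using term_aux[OF refl] by (rule LeastI_ex)

lemma before_kk: "j < kk \<Longrightarrow> 0 \<le> res (S (2*j))"
  unfolding kk_def using not_less_Least by force

declare bst.simps(2)[simp del]

lemma sum_gain: "K' \<le> kk \<Longrightarrow> (\<Sum>j=1..K'. g (pt (S (2*j))) - g (pt (S (2*j-1)))) = res (S 0) - res (S (2*K'))"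
proof (induction K')
  case 0 then show ?case by simp
next
  case (Suc K')
  have IH: "(\<Sum>j=1..K'. g (pt (S (2*j))) - g (pt (S (2*j-1)))) = res (S 0) - res (S (2*K'))"
    using Suc by simp
  have "0 \<le> res (S (2*K'))" using before_kk Suc.prems by simp
  from step_pair[OF _ this] have
    a: "res (S (Suc (2*K'))) = res (S (2*K'))" and
    b: "res (S (Suc (Suc (2*K')))) = res (S (Suc (2*K'))) - (g (pt (S (Suc (Suc (2*K'))))) - g (pt (S (Suc (2*K')))))"
    by auto
  have e1: "2 * Suc K' = Suc (Suc (2*K'))" and e2: "2 * Suc K' - 1 = Suc (2*K')" by simp_all
  have "(\<Sum>j=1..Suc K'. g (pt (S (2*j))) - g (pt (S (2*j-1)))) =
    (\<Sum>j=1..K'. g (pt (S (2*j))) - g (pt (S (2*j-1)))) + (g (pt (S (2 * Suc K'))) - g (pt (S (2 * Suc K' - 1))))"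
    by simp
  also have "\<dots> = res (S 0) - res (S (2 * Suc K'))" unfolding IH e1 e2 using a b by simp
  finally show ?case .
qed

lemma chain: "i < m (Suc j) \<Longrightarrow>
  norm (F (r i) (pt (S (j + d))) - F (r i) (pt (S j))) \<le> mu (S j) * k0 * (\<Sum>l\<in>{Suc j..j+d}. (1/2)^(m l))"
proof (induction d)
  case 0 then show ?case by simp
next
  case (Suc d)
  have i: "i < m (Suc (j + d))" using Suc.prems mle[of "Suc j" "Suc (j+d)"] by simp
  have c: "norm (F (r i) (pt (S (Suc (j + d)))) - F (r i) (pt (S (j + d)))) < mu (S (j+d)) * k0 / 2^(m (Suc (j+d)))"
    using bst_close[OF i] .
  have "mu (S (j+d)) * k0 / 2^(m (Suc (j+d))) \<le> mu (S j) * k0 * (1/2)^(m (Suc (j+d)))"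
    using mu_anti[of j "j+d"] k0 by (simp add: power_one_over divide_right_mono)
  with c have c2: "norm (F (r i) (pt (S (Suc (j + d)))) - F (r i) (pt (S (j + d)))) \<le> mu (S j) * k0 * (1/2)^(m (Suc (j+d)))"
    by simp
  have "norm (F (r i) (pt (S (j + Suc d))) - F (r i) (pt (S j))) \<le>
    norm (F (r i) (pt (S (Suc (j + d)))) - F (r i) (pt (S (j + d)))) + norm (F (r i) (pt (S (j + d))) - F (r i) (pt (S j)))"
    using norm_triangle_ineq[of "F (r i) (pt (S (Suc (j + d)))) - F (r i) (pt (S (j + d)))" "F (r i) (pt (S (j + d))) - F (r i) (pt (S j))"]
    by simp
  also have "\<dots> \<le> mu (S j) * k0 * (1/2)^(m (Suc (j+d))) + mu (S j) * k0 * (\<Sum>l\<in>{Suc j..j+d}. (1/2)^(m l))"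
    using c2 Suc by simp
  also have "\<dots> = mu (S j) * k0 * (\<Sum>l\<in>{Suc j..j+Suc d}. (1/2)^(m l))"
  proof -
    have "{Suc j..j+Suc d} = insert (Suc (j+d)) {Suc j..j+d}" by auto
    then have "(\<Sum>l\<in>{Suc j..j+Suc d}. (1/2::real)^(m l)) = (1/2)^(m (Suc (j+d))) + (\<Sum>l\<in>{Suc j..j+d}. (1/2)^(m l))"
      by simp
    then show ?thesis by (simp add: algebra_simps)
  qed
  finally show ?case .
qed

lemma inj_m: "inj_on m {1..}"
proof (rule inj_onI)
  fix a b assume a: "a \<in> {1..}" and b: "b \<in> {1..}" and e: "m a = m b"
  show "a = b"
  proof (rule ccontr)
    assume "a \<noteq> b"
    then have "a < b \<or> b < a" by auto
    then show False using mlt[of a b] mlt[of b a] a b e by auto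
  qed
qed

lemma chain_bound:
  assumes "j \<le> j'" "i < m (Suc j)"
  shows "norm (F (r i) (pt (S j')) - F (r i) (pt (S j))) \<le> mu (S j) * k0 * (1/2)^i"
proof -
  have "j' = j + (j' - j)" using assms(1) by simp
  then have c: "norm (F (r i) (pt (S j')) - F (r i) (pt (S j))) \<le> mu (S j) * k0 * (\<Sum>l\<in>{Suc j..j'}. (1/2)^(m l))"
    using chain[OF assms(2), of "j' - j"] by simp
  have inj: "inj_on m {Suc j..j'}" using inj_m by (rule inj_on_subset) auto
  have "(\<Sum>l\<in>{Suc j..j'}. (1/2::real)^(m l)) = (\<Sum>n\<in>m ` {Suc j..j'}. (1/2)^n)"
    using sum.reindex[OF inj, of "\<lambda>n. (1/2::real)^n"] by simp
  also have "\<dots> \<le> (1/2)^i"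
  proof (rule geo_bound)
    show "\<forall>n\<in>m ` {Suc j..j'}. i < n"
      using assms(2) mle[of "Suc j"] by fastforce
  qed simp
  finally have "(\<Sum>l\<in>{Suc j..j'}. (1/2::real)^(m l)) \<le> (1/2)^i" .
  moreover have "0 \<le> mu (S j) * k0" using mult_pos_pos[OF mu_pos[of j] k0(1)] by simp
  ultimately show ?thesis using c by (meson mult_left_mono order_trans)
qed

lemma approx:
  assumes "j = 0 \<or> m j \<le> i"
  shows "norm (F (r i) (pt (S j)) - Ff (pt (S j))) < mu (S j) * k0 * (1/2)^i"
proof -
  define L where "L = rev (map m [1..<Suc j])"
  have SL: "S j = nodeR r L" unfolding L_def by (rule bst_nodeR)
  have "L \<in> Lists i"
    unfolding Lists_def L_def
  proof (intro CollectI conjI)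
    show "set (rev (map m [1..<Suc j])) \<subseteq> {..i}"
    proof
      fix x assume "x \<in> set (rev (map m [1..<Suc j]))"
      then obtain l where l: "1 \<le> l" "l \<le> j" "x = m l" by auto
      then have "m j \<le> i" using assms by auto
      then show "x \<in> {..i}" using mle[OF l(1) l(2)] l(3) by simp
    qed
    show "length (rev (map m [1..<Suc j])) \<le> Suc i"
    proof (cases "j = 0")
      case False
      then have "j \<le> m j" "m j \<le> i" using m_ge[of j] assms by auto
      then show ?thesis by simp
    qed simp
  qed
  then show ?thesis using goodr SL unfolding goodP_def by (simp add: power_one_over)
qed

lemma active:
  assumes "j \<le> J" "j = 0 \<or> m j \<le> i" "j < J \<longrightarrow> i < m (Suc j)"
  shows "norm (F (r i) (pt (S J)) - Ff (pt (S j))) \<le> 2 * mu (S j) * k0 * (1/2)^i"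
proof (cases "j < J")
  case True
  have c: "norm (F (r i) (pt (S J)) - F (r i) (pt (S j))) \<le> mu (S j) * k0 * (1/2)^i"
    using chain_bound[of j J i] True assms by simp
  have a: "norm (F (r i) (pt (S j)) - Ff (pt (S j))) < mu (S j) * k0 * (1/2)^i" using approx assms by simp
  have "norm (F (r i) (pt (S J)) - Ff (pt (S j))) \<le> norm (F (r i) (pt (S J)) - F (r i) (pt (S j))) + norm (F (r i) (pt (S j)) - Ff (pt (S j)))"
    using norm_triangle_ineq[of "F (r i) (pt (S J)) - F (r i) (pt (S j))" "F (r i) (pt (S j)) - Ff (pt (S j))"] by simp
  then show ?thesis using c a by simp
next
  case False
  then have "j = J" using assms by simp
  have p: "0 < mu (S j) * k0 * (1/2)^i" using mult_pos_pos[OF mu_pos[of j] k0(1)] by simp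
  show ?thesis using approx[OF assms(2)] p \<open>j = J\<close> by simp
qed

lemma active_ex: "\<exists>j\<le>J. (j = 0 \<or> m j \<le> i) \<and> (j < J \<longrightarrow> i < m (Suc j))"
proof (induction J)
  case 0 then show ?case by simp
next
  case (Suc J)
  then obtain j where j: "j \<le> J" "j = 0 \<or> m j \<le> i" "j < J \<longrightarrow> i < m (Suc j)" by blast
  show ?case
  proof (cases "j < J \<or> i < m (Suc J)")
    case True
    then show ?thesis using j by (intro exI[of _ j]) auto
  next
    case False
    then show ?thesis by (intro exI[of _ "Suc J"]) auto
  qed
qed

lemma half_pow: "0 < n \<Longrightarrow> (1/2::real)^(n-1) = 2 * (1/2)^n"
  by (cases n) auto

abbreviation tt where "tt \<equiv> pt (S (2*kk))"

lemma e_eq: "1 < i \<Longrightarrow> diff_seq (\<lambda>j. F (r j)) i x = F (r i) x - F (r (i-1)) x"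
  by (simp add: diff_seq_def)

lemma jump:
  assumes j: "j \<in> {1..kk}"
  shows "Re (diff_seq (\<lambda>j. F (r j)) (m (2*j)) tt) > 0 \<and>
    Re (diff_seq (\<lambda>j. F (r j)) (m (2*j)) tt) \<ge> (g (pt (S (2*j))) - g (pt (S (2*j-1)))) - 6*k0*(1/2)^(m (2*j))"
proof -
  define n where "n = m (2*j)"
  have j1: "1 \<le> j" "j \<le> kk" using j by auto
  have mlt1: "m (2*j-1) < n" unfolding n_def using mlt[of "2*j-1" "2*j"] j1 by simp
  have j21: "1 \<le> 2*j-1" using j1 by simp
  have n2: "1 < n" using mlt1 m_ge[OF j21] j21 by linarith
  have A1: "norm (F (r n) tt - Ff (pt (S (2*j)))) \<le> 2 * mu (S (2*j)) * k0 * (1/2)^n"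
  proof (rule active)
    show "2 * j < 2 * kk \<longrightarrow> n < m (Suc (2 * j))" unfolding n_def using mlt[of "2*j" "Suc (2*j)"] j1 by simp
  qed (use j1 n_def in auto)
  have A2: "norm (F (r (n-1)) tt - Ff (pt (S (2*j-1)))) \<le> 2 * mu (S (2*j-1)) * k0 * (1/2)^(n-1)"
  proof (rule active)
    have "Suc (2*j-1) = 2*j" using j1 by simp
    then show "2 * j - 1 < 2 * kk \<longrightarrow> n - 1 < m (Suc (2 * j - 1))" unfolding n_def using n2 n_def by simp
  qed (use j1 mlt1 in auto)
  have e1: "Suc (2*(j-1)) = 2*j-1" and e2: "Suc (Suc (2*(j-1))) = 2*j" using j1 by simp_all
  have e3: "Suc (2*j-1) = 2*j" using j1 by simp
  have "0 \<le> res (S (2*(j-1)))" using before_kk j1 by simp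
  from step_pair[OF _ this, unfolded e1 e3]
  have gz: "g (pt (S (2*j))) > g (pt (S (2*j-1))) + hm (S (2*j-1))" and
    mueq: "mu (S (2*j)) = mu (S (2*j-1))" and muh: "mu (S (2*j-1)) \<le> hm (S (2*j-1))" by auto
  define q where "q = (1/2::real)^n"
  define \<mu> where "\<mu> = mu (S (2*j-1))"
  have q1: "(1/2::real)^(n-1) = 2 * q" unfolding q_def using half_pow n2 by simp
  have q0: "0 < q" "q \<le> 1" unfolding q_def by (simp_all add: power_le_one)
  have mu0: "0 < \<mu>" "\<mu> \<le> 1" unfolding \<mu>_def using mu_pos mu_le1 by auto
  define P where "P = \<mu> * k0 * q"
  have eP1: "2 * mu (S (2*j)) * k0 * (1/2)^n = 2 * P" unfolding P_def \<mu>_def q_def mueq by (simp add: algebra_simps)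
  have eP2: "2 * mu (S (2*j-1)) * k0 * (2 * q) = 4 * P" unfolding P_def \<mu>_def by (simp add: algebra_simps)
  have R1: "\<bar>Re (F (r n) tt) - g (pt (S (2*j)))\<bar> \<le> 2 * P"
  proof -
    have "\<bar>Re (F (r n) tt - Ff (pt (S (2*j))))\<bar> \<le> 2 * P"
      using abs_Re_le_cmod[of "F (r n) tt - Ff (pt (S (2*j)))"] A1 unfolding eP1 by linarith
    then show ?thesis unfolding g_def by simp
  qed
  have R2: "\<bar>Re (F (r (n-1)) tt) - g (pt (S (2*j-1)))\<bar> \<le> 4 * P"
  proof -
    have "\<bar>Re (F (r (n-1)) tt - Ff (pt (S (2*j-1))))\<bar> \<le> 4 * P"
      using abs_Re_le_cmod[of "F (r (n-1)) tt - Ff (pt (S (2*j-1)))"] A2 unfolding q1 eP2 by linarith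
    then show ?thesis unfolding g_def by simp
  qed
  have E: "Re (diff_seq (\<lambda>j. F (r j)) (m (2*j)) tt) = Re (F (r n) tt) - Re (F (r (n-1)) tt)"
    unfolding n_def[symmetric] using e_eq[OF n2] by simp
  have lowb: "Re (diff_seq (\<lambda>j. F (r j)) (m (2*j)) tt) \<ge> (g (pt (S (2*j))) - g (pt (S (2*j-1)))) - 6 * P"
    using R1 R2 E unfolding abs_le_iff by linarith
  have kq: "k0 * q \<le> 1/100" using k0 q0 mult_mono[of k0 "1/100" q 1] by simp
  have small: "P \<le> \<mu> / 100"
  proof -
    have "\<mu> * (k0 * q) \<le> \<mu> * (1/100)" using mu0 kq by (intro mult_left_mono) simp_all
    then show ?thesis unfolding P_def by (simp add: mult.assoc)
  qed
  have pos: "Re (diff_seq (\<lambda>j. F (r j)) (m (2*j)) tt) > 0"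
    using lowb gz muh small mu0 unfolding \<mu>_def by linarith
  have "\<mu> * (k0 * q) \<le> 1 * (k0 * q)" using mu0 k0 q0 by (intro mult_right_mono) simp_all
  then have "P \<le> k0 * q" unfolding P_def by (simp add: mult.assoc)
  then have "Re (diff_seq (\<lambda>j. F (r j)) (m (2*j)) tt) \<ge> (g (pt (S (2*j))) - g (pt (S (2*j-1)))) - 6*(k0*q)"
    using lowb by linarith
  then show ?thesis using pos unfolding q_def n_def by (simp add: mult.assoc)
qed

lemma nonjump:
  assumes i: "1 < i" "i \<notin> m ` {1..2*kk}"
  shows "norm (diff_seq (\<lambda>j. F (r j)) i tt) \<le> 6*k0*(1/2)^i"
proof -
  obtain j where j: "j \<le> 2*kk" "j = 0 \<or> m j \<le> i" "j < 2*kk \<longrightarrow> i < m (Suc j)"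
    using active_ex by blast
  have j': "j = 0 \<or> m j \<le> i - 1"
  proof (cases "j = 0")
    case False
    then have "j \<in> {1..2*kk}" using j by simp
    then have "m j \<noteq> i" using i by force
    then show ?thesis using j(2) False by simp
  qed simp
  have A1: "norm (F (r i) tt - Ff (pt (S j))) \<le> 2 * mu (S j) * k0 * (1/2)^i" using active[OF j] .
  have A2: "norm (F (r (i-1)) tt - Ff (pt (S j))) \<le> 2 * mu (S j) * k0 * (1/2)^(i-1)"
  proof -
    have "j < 2*kk \<longrightarrow> i - 1 < m (Suc j)" using j(3) by auto
    then show ?thesis using active[OF j(1) j'] by simp
  qed
  have q1: "(1/2::real)^(i-1) = 2 * (1/2)^i" using half_pow i(1) by simp
  have mu: "mu (S j) \<le> 1" "0 < mu (S j)" using mu_le1 mu_pos by auto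
  have "norm (diff_seq (\<lambda>j. F (r j)) i tt) = norm ((F (r i) tt - Ff (pt (S j))) - (F (r (i-1)) tt - Ff (pt (S j))))"
    using e_eq[OF i(1)] by simp
  also have "\<dots> \<le> norm (F (r i) tt - Ff (pt (S j))) + norm (F (r (i-1)) tt - Ff (pt (S j)))"
    by (rule norm_triangle_ineq4)
  also have "\<dots> \<le> 6 * (mu (S j) * k0 * (1/2)^i)"
  proof -
    have e1: "2 * mu (S j) * k0 * (1/2)^i = 2 * (mu (S j) * k0 * (1/2)^i)" by (simp add: algebra_simps)
    have e2: "2 * mu (S j) * k0 * (2 * (1/2)^i) = 4 * (mu (S j) * k0 * (1/2::real)^i)" by (simp add: algebra_simps)
    have "norm (F (r i) tt - Ff (pt (S j))) \<le> 2 * (mu (S j) * k0 * (1/2)^i)" using A1 unfolding e1 .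
    moreover have "norm (F (r (i-1)) tt - Ff (pt (S j))) \<le> 4 * (mu (S j) * k0 * (1/2)^i)" using A2 unfolding q1 e2 .
    ultimately show ?thesis by linarith
  qed
  also have "\<dots> \<le> 6 * (k0 * (1/2)^i)"
  proof -
    have "mu (S j) * (k0 * (1/2)^i) \<le> 1 * (k0 * (1/2)^i)" using mu k0 by (intro mult_right_mono) simp_all
    then show ?thesis by (simp add: mult.assoc)
  qed
  finally show ?thesis by simp
qed

lemma branch_ok:
  "\<exists>t\<in>K. \<exists>k. (\<Sum>j=1..k. Re (diff_seq (\<lambda>j. F (r j)) (m (2*j)) t)) > M \<and>
     (\<forall>j\<in>{1..k}. Re (diff_seq (\<lambda>j. F (r j)) (m (2*j)) t) > 0) \<and>
     (\<lambda>i. norm (diff_seq (\<lambda>j. F (r j)) i t)) summable_on {i. i > 1 \<and> i \<notin> m ` {1..2*k}} \<and>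
     infsum (\<lambda>i. norm (diff_seq (\<lambda>j. F (r j)) i t)) {i. i > 1 \<and> i \<notin> m ` {1..2*k}} \<le> 3*k0"
proof (intro bexI[of _ tt] exI[of _ kk] conjI)
  show "tt \<in> K" using pt_K .
  show "\<forall>j\<in>{1..kk}. Re (diff_seq (\<lambda>j. F (r j)) (m (2*j)) tt) > 0" using jump by blast
  have L1: "(\<Sum>j=1..kk. (g (pt (S (2*j))) - g (pt (S (2*j-1)))) - 6*k0*(1/2)^(m (2*j))) \<le>
      (\<Sum>j=1..kk. Re (diff_seq (\<lambda>j. F (r j)) (m (2*j)) tt))"
  proof (rule sum_mono)
    fix j assume "j \<in> {1..kk}"
    from jump[OF this] show "(g (pt (S (2*j))) - g (pt (S (2*j-1)))) - 6*k0*(1/2)^(m (2*j)) \<le>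
      Re (diff_seq (\<lambda>j. F (r j)) (m (2*j)) tt)" by (rule conjunct2)
  qed
  have L2: "(\<Sum>j=1..kk. (g (pt (S (2*j))) - g (pt (S (2*j-1)))) - 6*k0*(1/2)^(m (2*j))) =
     (\<Sum>j=1..kk. (g (pt (S (2*j))) - g (pt (S (2*j-1))))) - 6*k0*(\<Sum>j=1..kk. (1/2)^(m (2*j)))"
    by (simp add: sum_subtractf sum_distrib_left)
  have L3: "(\<Sum>j=1..kk. (g (pt (S (2*j))) - g (pt (S (2*j-1))))) = res (S 0) - res (S (2*kk))"
    using sum_gain[of kk] by simp
  have L: "(\<Sum>j=1..kk. Re (diff_seq (\<lambda>j. F (r j)) (m (2*j)) tt)) \<ge>
      (res (S 0) - res (S (2*kk))) - 6*k0*(\<Sum>j=1..kk. (1/2)^(m (2*j)))"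
    using L1 L2 L3 by linarith
  have inj: "inj_on (\<lambda>j. m (2*j)) {1..kk}"
  proof (rule inj_onI)
    fix a b assume a: "a \<in> {1..kk}" and b: "b \<in> {1..kk}" and e: "m (2*a) = m (2*b)"
    have "2*a \<in> {1..}" "2*b \<in> {1..}" using a b by auto
    then have "2*a = 2*b" using inj_m e unfolding inj_on_def by blast
    then show "a = b" by simp
  qed
  have "(\<Sum>j=1..kk. (1/2::real)^(m (2*j))) = (\<Sum>n\<in>(\<lambda>j. m (2*j)) ` {1..kk}. (1/2)^n)"
    using sum.reindex[OF inj, of "\<lambda>n. (1/2::real)^n"] by simp
  also have "\<dots> \<le> (1/2)^0"
  proof (rule geo_bound)
    show "\<forall>n\<in>(\<lambda>j. m (2*j)) ` {1..kk}. 0 < n"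
    proof
      fix n assume "n \<in> (\<lambda>j. m (2*j)) ` {1..kk}"
      then obtain j where "j \<in> {1..kk}" "n = m (2*j)" by blast
      then show "0 < n" using m1 mle[of 1 "2*j"] by simp
    qed
  qed simp
  finally have G: "(\<Sum>j=1..kk. (1/2::real)^(m (2*j))) \<le> 1" by simp
  have r0: "res (S 0) = M + 1" by (simp add: st0_def)
  have "6*k0*(\<Sum>j=1..kk. (1/2)^(m (2*j))) \<le> 6*k0*1" using G k0 by (intro mult_left_mono) simp_all
  then show "(\<Sum>j=1..kk. Re (diff_seq (\<lambda>j. F (r j)) (m (2*j)) tt)) > M"
    using L kk r0 k0 by linarith
  define A where "A = {i. i > 1 \<and> i \<notin> m ` {1..2*kk}}"
  have fin: "sum (\<lambda>i. norm (diff_seq (\<lambda>j. F (r j)) i tt)) X \<le> 3*k0" if "finite X" "X \<subseteq> A" for X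
  proof -
    have "sum (\<lambda>i. norm (diff_seq (\<lambda>j. F (r j)) i tt)) X \<le> sum (\<lambda>i. 6*k0*(1/2)^i) X"
      proof (rule sum_mono)
      fix i assume "i \<in> X"
      then have "1 < i" "i \<notin> m ` {1..2*kk}" using that(2) unfolding A_def by auto
      then show "norm (diff_seq (\<lambda>j. F (r j)) i tt) \<le> 6*k0*(1/2)^i" by (rule nonjump)
    qed
    also have "\<dots> = 6*k0 * sum (\<lambda>i. (1/2::real)^i) X" by (simp add: sum_distrib_left)
    also have "\<dots> \<le> 6*k0 * (1/2)^1"
      proof (rule mult_left_mono)
      show "sum (\<lambda>i. (1/2::real)^i) X \<le> (1/2)^1"
        by (rule geo_bound[OF that(1)]) (use that(2) in \<open>auto simp: A_def\<close>)
    qed (use k0 in simp)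
    finally show ?thesis by simp
  qed
  show "(\<lambda>i. norm (diff_seq (\<lambda>j. F (r j)) i tt)) summable_on {i. i > 1 \<and> i \<notin> m ` {1..2*kk}}"
    unfolding A_def[symmetric]
  proof (rule nonneg_bounded_partial_sums_imp_summable_on[where C="3*k0"])
    show "\<forall>\<^sub>F X in finite_subsets_at_top A. sum (\<lambda>i. norm (diff_seq (\<lambda>j. F (r j)) i tt)) X \<le> 3*k0"
      by (rule eventually_finite_subsets_at_top_weakI) (rule fin)
  qed simp
  then show "infsum (\<lambda>i. norm (diff_seq (\<lambda>j. F (r j)) i tt)) {i. i > 1 \<and> i \<notin> m ` {1..2*kk}} \<le> 3*k0"
    unfolding A_def[symmetric] by (rule infsum_le_finite_sums) (rule fin)
qed

end

lemma main: "\<exists>r. strict_mono r \<and> (\<forall>m::nat\<Rightarrow>nat. (0 < m 1 \<and> (\<forall>j\<ge>1. m j < m (Suc j))) \<longrightarrow>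
  (\<exists>t\<in>K. \<exists>k. (\<Sum>j=1..k. Re (diff_seq (\<lambda>j. F (r j)) (m (2*j)) t)) > M \<and>
     (\<forall>j\<in>{1..k}. Re (diff_seq (\<lambda>j. F (r j)) (m (2*j)) t) > 0) \<and>
     (\<lambda>i. norm (diff_seq (\<lambda>j. F (r j)) i t)) summable_on {i. i > 1 \<and> i \<notin> m ` {1..2*k}} \<and>
     infsum (\<lambda>i. norm (diff_seq (\<lambda>j. F (r j)) i t)) {i. i > 1 \<and> i \<notin> m ` {1..2*k}} \<le> 3*k0))"
proof -
  obtain r where good: "\<forall>n. goodP n r (r n)" using good_r by blast
  have "r n < r (Suc n)" for n using good[rule_format, of "Suc n"] unfolding goodP_def by simp
  then have sm: "strict_mono r" by (rule strict_monoI_Suc)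
  show ?thesis
  proof (intro exI[of _ r] conjI sm allI impI)
    fix m :: "nat \<Rightarrow> nat" assume a: "0 < m 1 \<and> (\<forall>j\<ge>1. m j < m (Suc j))"
    show "\<exists>t\<in>K. \<exists>k. (\<Sum>j=1..k. Re (diff_seq (\<lambda>j. F (r j)) (m (2*j)) t)) > M \<and>
     (\<forall>j\<in>{1..k}. Re (diff_seq (\<lambda>j. F (r j)) (m (2*j)) t) > 0) \<and>
     (\<lambda>i. norm (diff_seq (\<lambda>j. F (r j)) i t)) summable_on {i. i > 1 \<and> i \<notin> m ` {1..2*k}} \<and>
     infsum (\<lambda>i. norm (diff_seq (\<lambda>j. F (r j)) i t)) {i. i > 1 \<and> i \<notin> m ` {1..2*k}} \<le> 3*k0"
      by (rule branch_ok[OF good]) (use a in auto)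
  qed
qed

end

theorem theorem2p5:
  fixes K :: "'a::metric_space set"
    and fs :: "nat \<Rightarrow> 'a \<Rightarrow> complex"
    and f :: "'a \<Rightarrow> complex"
  assumes "compact K"
    and "\<And>n. continuous_on K (fs n)"
    and "\<exists>B. \<forall>n. \<forall>x\<in>K. norm (fs n x) \<le> B"
    and "\<And>x. x \<in> K \<Longrightarrow> (\<lambda>n. fs n x) \<longlonglongrightarrow> f x"
    and "f \<notin> D_K K"
  shows "\<exists>c::complex. norm c = 1 \<and>
    (\<forall>M::real. \<forall>\<kappa>::real. \<kappa> > 0 \<longrightarrow>
      (\<exists>r::nat \<Rightarrow> nat. strict_mono r \<and>
        (let b = (\<lambda>j x. c * fs (r j) x); e = diff_seq b in
         \<forall>m::nat \<Rightarrow> nat. (0 < m 1 \<and> (\<forall>j\<ge>1. m j < m (Suc j))) \<longrightarrow>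
           (\<exists>t\<in>K. \<exists>k::nat.
              (\<Sum>j=1..k. Re (e (m (2*j)) t)) > M \<and>
              (\<forall>j\<in>{1..k}. Re (e (m (2*j)) t) > 0) \<and>
              (let S = {i. i > 1 \<and> i \<notin> m ` {1..2*k}} in
                 (\<lambda>i. norm (e i t)) summable_on S \<and>
                 infsum (\<lambda>i. norm (e i t)) S < \<kappa>)))))"
proof -
  note cK = assms(1) and cF = assms(2) and conv = assms(4)
  obtain B where B: "\<forall>n. \<forall>x\<in>K. norm (fs n x) \<le> B" using assms(3) by blast
  have fB: "\<forall>x\<in>K. norm (f x) \<le> B"
  proof
    fix x assume x: "x \<in> K"
    have "(\<lambda>n. norm (fs n x)) \<longlonglongrightarrow> norm (f x)" using conv[OF x] by (rule tendsto_norm)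
    moreover have "eventually (\<lambda>n. norm (fs n x) \<le> B) sequentially" using B x by simp
    ultimately show "norm (f x) \<le> B" by (rule tendsto_upperbound) simp
  qed
  obtain c where c: "norm c = 1" and W: "\<forall>M. \<exists>x\<in>K. win K (\<lambda>x. Re (c * f x)) x M"
    using notD[OF assms(5) fB] by blast
  show ?thesis
  proof (intro exI[of _ c] conjI c allI impI)
    fix M \<kappa> :: real assume \<kappa>: "\<kappa> > 0"
    obtain x0 where x0: "x0 \<in> K" and w0: "win K (\<lambda>x. Re (c * f x)) x0 (M+1)" using W by blast
    obtain T0 where T0: "wint K (\<lambda>x. Re (c * f x)) x0 (M+1) T0" using win_wint[OF w0] by blast
    define k0 where "k0 = min \<kappa> 1 / 100"
    have hk0: "0 < k0" "k0 \<le> 1/100" "3 * k0 < \<kappa>" unfolding k0_def using \<kappa> by auto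
    interpret cons K "\<lambda>n x. c * fs n x" "\<lambda>x. c * f x" k0 M x0 T0
    proof
      show "compact K" by fact
      show "continuous_on K (\<lambda>x. c * fs n x)" for n
        by (intro continuous_on_mult continuous_on_const cF)
      show "(\<lambda>n. c * fs n x) \<longlonglongrightarrow> c * f x" if "x \<in> K" for x
        using conv[OF that] by (rule tendsto_mult_left)
    qed (use hk0 x0 T0 in auto)
    obtain r where r: "strict_mono r" and R: "\<forall>m::nat\<Rightarrow>nat. (0 < m 1 \<and> (\<forall>j\<ge>1. m j < m (Suc j))) \<longrightarrow>
      (\<exists>t\<in>K. \<exists>k. (\<Sum>j=1..k. Re (diff_seq (\<lambda>j x. c * fs (r j) x) (m (2*j)) t)) > M \<and>
       (\<forall>j\<in>{1..k}. Re (diff_seq (\<lambda>j x. c * fs (r j) x) (m (2*j)) t) > 0) \<and>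
       (\<lambda>i. norm (diff_seq (\<lambda>j x. c * fs (r j) x) i t)) summable_on {i. i > 1 \<and> i \<notin> m ` {1..2*k}} \<and>
       infsum (\<lambda>i. norm (diff_seq (\<lambda>j x. c * fs (r j) x) i t)) {i. i > 1 \<and> i \<notin> m ` {1..2*k}} \<le> 3*k0)"
      using main by blast
    show "\<exists>r::nat \<Rightarrow> nat. strict_mono r \<and>
        (let b = (\<lambda>j x. c * fs (r j) x); e = diff_seq b in
         \<forall>m::nat \<Rightarrow> nat. (0 < m 1 \<and> (\<forall>j\<ge>1. m j < m (Suc j))) \<longrightarrow>
           (\<exists>t\<in>K. \<exists>k::nat.
              (\<Sum>j=1..k. Re (e (m (2*j)) t)) > M \<and>
              (\<forall>j\<in>{1..k}. Re (e (m (2*j)) t) > 0) \<and>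
              (let S = {i. i > 1 \<and> i \<notin> m ` {1..2*k}} in
                 (\<lambda>i. norm (e i t)) summable_on S \<and>
                 infsum (\<lambda>i. norm (e i t)) S < \<kappa>)))"
      unfolding Let_def
    proof (intro exI[of _ r] conjI r allI impI)
      fix m :: "nat \<Rightarrow> nat" assume a: "0 < m 1 \<and> (\<forall>j\<ge>1. m j < m (Suc j))"
      from R[rule_format, OF a] obtain t k where t: "t \<in> K" and
        P: "(\<Sum>j=1..k. Re (diff_seq (\<lambda>j x. c * fs (r j) x) (m (2*j)) t)) > M \<and>
       (\<forall>j\<in>{1..k}. Re (diff_seq (\<lambda>j x. c * fs (r j) x) (m (2*j)) t) > 0) \<and>
       (\<lambda>i. norm (diff_seq (\<lambda>j x. c * fs (r j) x) i t)) summable_on {i. i > 1 \<and> i \<notin> m ` {1..2*k}} \<and>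
       infsum (\<lambda>i. norm (diff_seq (\<lambda>j x. c * fs (r j) x) i t)) {i. i > 1 \<and> i \<notin> m ` {1..2*k}} \<le> 3*k0"
        by blast
      show "\<exists>t\<in>K. \<exists>k::nat.
              (\<Sum>j=1..k. Re (diff_seq (\<lambda>j x. c * fs (r j) x) (m (2*j)) t)) > M \<and>
              (\<forall>j\<in>{1..k}. Re (diff_seq (\<lambda>j x. c * fs (r j) x) (m (2*j)) t) > 0) \<and>
                 (\<lambda>i. norm (diff_seq (\<lambda>j x. c * fs (r j) x) i t)) summable_on {i. i > 1 \<and> i \<notin> m ` {1..2*k}} \<and>
                 infsum (\<lambda>i. norm (diff_seq (\<lambda>j x. c * fs (r j) x) i t)) {i. i > 1 \<and> i \<notin> m ` {1..2*k}} < \<kappa>"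
        using t P hk0(3) by (intro bexI[of _ t] exI[of _ k]) auto
    qed
  qed
qed

end
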